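(* Let $k\ge2$, $p\in\mathbb{S}^n$, $R\in(0,\pi/2)$, $B_R=\{q:\mathbf{d}_p(q)\le R\}$, $y\in\partial B_R$, and let $\gamma:[R,\pi]\to\mathbb{S}^n$ be the unit-speed minimizing geodesic from $y$ to $-p$, parametrized so that $\mathbf{d}_p(\gamma(s))=s$. Suppose $u$ is a bounded integrable function on $[R,\pi]$. Then the vector field $x\mapsto\int_R^\pi u(s)\Psi_{\gamma(s)}(x)\,ds$ on $B_R\setminus\{y\}$ satisfies \[\int_R^\pi u(s)\Psi_{\gamma(s)}\,ds=o(\mathbf{d}_y^{1-k})\quad\text{as }\mathbf{d}_y\searrow0.\]
   Context: $\mathbb{S}^n$ is the unit round sphere with Levi-Civita connection $\nabla$; $\mathbf{d}_q$ is geodesic distance from $q$. $I_k(r)=\int_0^r\sin^{k-1}s\,ds$, $\varphi(t)=I_k(t)\sin^{1-k}t$ for $t\in(0,\pi)$, $\varphi(0)=0$, $\Phi_q=(\varphi\circ\mathbf{d}_q)\nabla\mathbf{d}_q$ on $\mathbb{S}^n\setminus\{-q\}$, and $\Psi_q:=\Phi_{-q}$ on $\mathbb{S}^n\setminus\{q\}$. *)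

theory Defs
  imports "HOL-Analysis.Analysis"
begin

text \<open>The unit round sphere S^n is modelled as sphere 0 1 in a Euclidean space 'a
  (n = DIM('a) - 1); tangent vectors / vector fields live in the ambient space.\<close>

definition sdist :: "'a::euclidean_space \<Rightarrow> 'a \<Rightarrow> real" where
  "sdist q x = arccos (q \<bullet> x)"

text \<open>Riemannian gradient (for the induced round metric) of a function f on the sphere at x:
  the tangent vector v (v orthogonal to x) representing the derivative of f along the sphere.\<close>
definition sgrad :: "('a::euclidean_space \<Rightarrow> real) \<Rightarrow> 'a \<Rightarrow> 'a" where
  "sgrad f x = (THE v. v \<bullet> x = 0 \<and> (f has_derivative (\<lambda>h. v \<bullet> h)) (at x within sphere 0 1))"

definition Ik :: "nat \<Rightarrow> real \<Rightarrow> real" where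
  "Ik k r = integral {0..r} (\<lambda>s. sin s ^ (k - 1))"

definition phi :: "nat \<Rightarrow> real \<Rightarrow> real" where
  "phi k t = (if t = 0 then 0 else Ik k t / sin t ^ (k - 1))"

text \<open>Phi_q = (phi o d_q) grad d_q, meaningful on S^n minus {-q}.\<close>
definition Phi :: "nat \<Rightarrow> 'a::euclidean_space \<Rightarrow> 'a \<Rightarrow> 'a" where
  "Phi k q x = phi k (sdist q x) *\<^sub>R sgrad (sdist q) x"

definition Psi :: "nat \<Rightarrow> 'a::euclidean_space \<Rightarrow> 'a \<Rightarrow> 'a" where
  "Psi k q x = Phi k (- q) x"

end

theory Submission
  imports Defs
begin

lemma unit_inner_bounds:
  fixes a b :: "'a::euclidean_space"
  assumes "norm a = 1" "norm b = 1"
  shows "-1 \<le> a \<bullet> b" "a \<bullet> b \<le> 1"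
proof -
  have "\<bar>a \<bullet> b\<bar> \<le> 1" using Cauchy_Schwarz_ineq2[of a b] assms by simp
  then show "-1 \<le> a \<bullet> b" "a \<bullet> b \<le> 1" by auto
qed

lemma sdist_range:
  fixes a b :: "'a::euclidean_space"
  assumes "norm a = 1" "norm b = 1"
  shows "0 \<le> sdist a b" "sdist a b \<le> pi"
  using unit_inner_bounds[OF assms] by (auto simp: sdist_def arccos_lbound arccos_ubound)

lemma sdist_sym: "sdist a b = sdist b a"
  by (simp add: sdist_def inner_commute)

lemma sdist_self: "norm a = 1 \<Longrightarrow> sdist a a = 0"
  by (simp add: sdist_def dot_square_norm)

lemma sdist_neg:
  fixes a b :: "'a::euclidean_space"
  assumes "norm a = 1" "norm b = 1"
  shows "sdist (-a) b = pi - sdist a b"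
  using unit_inner_bounds[OF assms] by (simp add: sdist_def arccos_minus)

lemma sdist_zero_iff:
  fixes a b :: "'a::euclidean_space"
  assumes "norm a = 1" "norm b = 1" "sdist a b = 0"
  shows "a = b"
proof -
  have "a \<bullet> b = 1"
    using unit_inner_bounds[OF assms(1,2)] assms(3) unfolding sdist_def
    using arccos_eq_0_iff by auto
  moreover have "norm (a - b)^2 = a \<bullet> a - 2 * (a \<bullet> b) + b \<bullet> b"
    unfolding power2_norm_eq_inner by (simp add: inner_diff_left inner_diff_right inner_commute)
  ultimately have "norm (a - b)^2 = 0"
    using assms by (simp add: dot_square_norm)
  then show ?thesis by simp
qed

lemma sdist_triangle:
  fixes a b c :: "'a::euclidean_space"
  assumes "norm a = 1" "norm b = 1" "norm c = 1"
  shows "sdist a c \<le> sdist a b + sdist b c"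
proof (cases "sdist a b + sdist b c \<le> pi")
  case False
  then show ?thesis using sdist_range[OF assms(1,3)] by linarith
next
  case True
  define \<alpha> where "\<alpha> = sdist a b"
  define \<beta> where "\<beta> = sdist b c"
  have ab: "-1 \<le> a \<bullet> b" "a \<bullet> b \<le> 1" using unit_inner_bounds[OF assms(1,2)] by auto
  have bc: "-1 \<le> b \<bullet> c" "b \<bullet> c \<le> 1" using unit_inner_bounds[OF assms(2,3)] by auto
  have ac: "-1 \<le> a \<bullet> c" "a \<bullet> c \<le> 1" using unit_inner_bounds[OF assms(1,3)] by auto
  have ca: "cos \<alpha> = a \<bullet> b" "cos \<beta> = b \<bullet> c"
    using ab bc by (auto simp: \<alpha>_def \<beta>_def sdist_def cos_arccos)
  have sa: "sin \<alpha> = sqrt (1 - (a \<bullet> b)^2)" "sin \<beta> = sqrt (1 - (b \<bullet> c)^2)"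
    using ab bc by (auto simp: \<alpha>_def \<beta>_def sdist_def sin_arccos)
  have n1: "norm (a - (a \<bullet> b) *\<^sub>R b) = sqrt (1 - (a \<bullet> b)^2)"
  proof -
    have "norm (a - (a \<bullet> b) *\<^sub>R b)^2 = a \<bullet> a - 2 * (a \<bullet> b) * (a \<bullet> b) + (a \<bullet> b)^2 * (b \<bullet> b)"
      unfolding power2_norm_eq_inner by (simp add: inner_diff_left inner_diff_right inner_commute algebra_simps power2_eq_square)
    also have "\<dots> = 1 - (a \<bullet> b)^2" using assms by (simp add: dot_square_norm power2_eq_square)
    finally show ?thesis by (metis norm_ge_zero real_sqrt_unique)
  qed
  have n2: "norm (c - (b \<bullet> c) *\<^sub>R b) = sqrt (1 - (b \<bullet> c)^2)"
  proof -
    have "norm (c - (b \<bullet> c) *\<^sub>R b)^2 = c \<bullet> c - 2 * (b \<bullet> c) * (b \<bullet> c) + (b \<bullet> c)^2 * (b \<bullet> b)"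
      unfolding power2_norm_eq_inner by (simp add: inner_diff_left inner_diff_right inner_commute algebra_simps power2_eq_square)
    also have "\<dots> = 1 - (b \<bullet> c)^2" using assms by (simp add: dot_square_norm power2_eq_square)
    finally show ?thesis by (metis norm_ge_zero real_sqrt_unique)
  qed
  have eq: "(a - (a \<bullet> b) *\<^sub>R b) \<bullet> (c - (b \<bullet> c) *\<^sub>R b) = a \<bullet> c - (a \<bullet> b) * (b \<bullet> c)"
  proof -
    have "(a - (a \<bullet> b) *\<^sub>R b) \<bullet> (c - (b \<bullet> c) *\<^sub>R b) = a \<bullet> c - (a \<bullet> b) * (b \<bullet> c) - (a \<bullet> b) * (b \<bullet> c) + (a \<bullet> b) * (b \<bullet> c) * (b \<bullet> b)"
      by (simp add: inner_diff_left inner_diff_right inner_commute algebra_simps)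
    then show ?thesis using assms by (simp add: dot_square_norm)
  qed
  have "\<bar>a \<bullet> c - (a \<bullet> b) * (b \<bullet> c)\<bar> \<le> sin \<alpha> * sin \<beta>"
    using Cauchy_Schwarz_ineq2[of "a - (a \<bullet> b) *\<^sub>R b" "c - (b \<bullet> c) *\<^sub>R b"] eq n1 n2 sa by simp
  then have "cos (\<alpha> + \<beta>) \<le> a \<bullet> c" by (simp add: cos_add ca)
  then have "arccos (a \<bullet> c) \<le> arccos (cos (\<alpha> + \<beta>))"
    using ac by (intro arccos_le_arccos) auto
  also have "arccos (cos (\<alpha> + \<beta>)) = \<alpha> + \<beta>"
    using True sdist_range[OF assms(1,2)] sdist_range[OF assms(2,3)]
    by (intro arccos_cos) (auto simp: \<alpha>_def \<beta>_def)
  finally show ?thesis by (simp add: sdist_def \<alpha>_def \<beta>_def)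
qed

lemma norm_sub_proj:
  fixes q x :: "'a::euclidean_space"
  assumes "norm q = 1" "norm x = 1"
  shows "norm (q - (q \<bullet> x) *\<^sub>R x) = sqrt (1 - (q \<bullet> x)^2)"
proof -
  have "norm (q - (q \<bullet> x) *\<^sub>R x)^2 = q \<bullet> q - 2 * (q \<bullet> x) * (q \<bullet> x) + (q \<bullet> x)^2 * (x \<bullet> x)"
    unfolding power2_norm_eq_inner by (simp add: inner_diff_left inner_diff_right inner_commute algebra_simps power2_eq_square)
  also have "\<dots> = 1 - (q \<bullet> x)^2" using assms by (simp add: dot_square_norm power2_eq_square)
  finally show ?thesis by (metis norm_ge_zero real_sqrt_unique)
qed

lemma sgrad_sdist_norm:
  fixes q x :: "'a::euclidean_space"
  assumes q: "norm q = 1" and x: "norm x = 1" and "x \<noteq> q" "x \<noteq> -q"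
  shows "norm (sgrad (sdist q) x) = 1"
proof -
  define c where "c = q \<bullet> x"
  have cb: "-1 \<le> c" "c \<le> 1" using unit_inner_bounds[OF q x] by (auto simp: c_def)
  have "c \<noteq> 1"
  proof
    assume "c = 1" then have "sdist q x = 0" by (simp add: sdist_def c_def)
    then show False using sdist_zero_iff[OF q x] assms by auto
  qed
  moreover have "c \<noteq> -1"
  proof
    assume "c = -1" then have "sdist (-q) x = 0" by (simp add: sdist_def c_def)
    then show False using sdist_zero_iff[of "-q" x] q x assms by auto
  qed
  ultimately have c1: "-1 < c" "c < 1" using cb by auto
  have sq: "0 < sqrt (1 - c^2)"
    using c1 by (simp add: abs_square_less_1)
  define D where "D = inverse (- sqrt (1 - c^2))"
  define v where "v = D *\<^sub>R (q - c *\<^sub>R x)"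
  have xx: "x \<bullet> x = 1" using x by (simp add: dot_square_norm)
  have vx: "v \<bullet> x = 0" by (simp add: v_def inner_diff_left xx c_def)
  have nv: "norm v = 1"
    using norm_sub_proj[OF q x] sq by (simp add: v_def D_def c_def)
  have dinner: "((\<lambda>z. q \<bullet> z - c / 2 * (z \<bullet> z - 1)) has_derivative (\<lambda>h. (q - c *\<^sub>R x) \<bullet> h)) (at x)"
  proof -
    have "((\<lambda>z. q \<bullet> z - c / 2 * (z \<bullet> z - 1)) has_derivative
           (\<lambda>h. q \<bullet> h - c / 2 * (x \<bullet> h + h \<bullet> x - 0))) (at x)"
      by (intro has_derivative_diff has_derivative_mult_right has_derivative_inner_right
            has_derivative_inner has_derivative_ident has_derivative_const)
    moreover have "(\<lambda>h. q \<bullet> h - c / 2 * (x \<bullet> h + h \<bullet> x - 0)) = (\<lambda>h. (q - c *\<^sub>R x) \<bullet> h)"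
      by (auto simp: inner_diff_left inner_diff_right inner_commute)
    ultimately show ?thesis by simp
  qed
  have "(arccos has_field_derivative D) (at c)" using DERIV_arccos[OF c1] by (simp add: D_def)
  then have "(arccos has_derivative (*) D) (at c)" by (simp add: has_field_derivative_def)
  moreover have "(\<lambda>z. q \<bullet> z - c / 2 * (z \<bullet> z - 1)) x = c" using xx by (simp add: c_def)
  ultimately have darc: "(arccos has_derivative (*) D) (at ((\<lambda>z. q \<bullet> z - c / 2 * (z \<bullet> z - 1)) x))"
    by (simp only:)
  have "((\<lambda>z. arccos (q \<bullet> z - c / 2 * (z \<bullet> z - 1))) has_derivative (\<lambda>h. D * ((q - c *\<^sub>R x) \<bullet> h))) (at x)"
    using has_derivative_compose[OF dinner darc] by (simp only:)
  moreover have "(\<lambda>h. D * ((q - c *\<^sub>R x) \<bullet> h)) = (\<lambda>h. v \<bullet> h)" by (simp add: v_def)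
  ultimately have "((\<lambda>z. arccos (q \<bullet> z - c / 2 * (z \<bullet> z - 1))) has_derivative (\<lambda>h. v \<bullet> h)) (at x)"
    by (simp only:)
  then have "((\<lambda>z. arccos (q \<bullet> z - c / 2 * (z \<bullet> z - 1))) has_derivative (\<lambda>h. v \<bullet> h)) (at x within sphere 0 1)"
    by (rule has_derivative_at_withinI)
  then have dv: "(sdist q has_derivative (\<lambda>h. v \<bullet> h)) (at x within sphere 0 1)"
  proof (rule has_derivative_transform_within)
    show "(0::real) < 1" by simp
    show "x \<in> sphere 0 1" using x by simp
    fix z :: 'a assume "z \<in> sphere 0 1" "dist z x < 1"
    then have "z \<bullet> z = 1" by (simp add: dot_square_norm)
    then show "arccos (q \<bullet> z - c / 2 * (z \<bullet> z - 1)) = sdist q z" by (simp add: sdist_def)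
  qed
  have uniq: "w = v" if w: "w \<bullet> x = 0" "(sdist q has_derivative (\<lambda>h. w \<bullet> h)) (at x within sphere 0 1)" for w
  proof (rule ccontr)
    assume "w \<noteq> v"
    define e where "e = w - v"
    have ne: "norm e > 0" using \<open>w \<noteq> v\<close> by (simp add: e_def)
    define e1 where "e1 = e /\<^sub>R norm e"
    have "x \<bullet> e = 0" using w(1) vx by (simp add: e_def inner_diff_right inner_commute)
    then have e1x: "x \<bullet> e1 = 0" by (simp add: e1_def)
    have ne1: "e1 \<bullet> e1 = 1" using ne by (simp add: e1_def dot_square_norm)
    define \<alpha> where "\<alpha> = (\<lambda>t::real. cos t *\<^sub>R x + sin t *\<^sub>R e1)"
    have asph: "\<alpha> ` UNIV \<subseteq> sphere 0 1"
    proof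
      fix z assume "z \<in> \<alpha> ` UNIV"
      then obtain t where z: "z = \<alpha> t" by auto
      have "norm z ^2 = (cos t)^2 * (x \<bullet> x) + 2 * cos t * sin t * (x \<bullet> e1) + (sin t)^2 * (e1 \<bullet> e1)"
        unfolding power2_norm_eq_inner z \<alpha>_def
        by (simp add: inner_add_left inner_add_right inner_commute algebra_simps power2_eq_square)
      also have "\<dots> = 1" using xx e1x ne1 by simp
      finally have "norm z ^ 2 = 1 ^ 2" by simp
      then have "norm z = 1" using power2_eq_iff_nonneg[of "norm z" 1] by simp
      then show "z \<in> sphere 0 1" by simp
    qed
    have a0: "\<alpha> 0 = x" by (simp add: \<alpha>_def)
    have da: "(\<alpha> has_derivative (\<lambda>t. t *\<^sub>R e1)) (at 0)"
    proof -
      have c0: "(cos has_derivative (*) (- sin 0)) (at (0::real))"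
        using DERIV_cos[of 0] by (simp add: has_field_derivative_def)
      have s0: "(sin has_derivative (*) (cos 0)) (at (0::real))"
        using DERIV_sin[of 0] by (simp add: has_field_derivative_def)
      have "(\<alpha> has_derivative (\<lambda>t. (- sin 0 * t) *\<^sub>R x + (cos 0 * t) *\<^sub>R e1)) (at 0)"
        unfolding \<alpha>_def
        by (intro has_derivative_add has_derivative_scaleR_left c0 s0)
      moreover have "(\<lambda>t. (- sin 0 * t) *\<^sub>R x + (cos 0 * t) *\<^sub>R e1) = (\<lambda>t. t *\<^sub>R e1)"
        by simp
      ultimately show ?thesis by (simp only:)
    qed
    have comp: "((\<lambda>t. sdist q (\<alpha> t)) has_derivative (\<lambda>t. u \<bullet> (t *\<^sub>R e1))) (at 0)"
      if "(sdist q has_derivative (\<lambda>h. u \<bullet> h)) (at x within sphere 0 1)" for u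
    proof -
      have hs: "(sdist q has_derivative (\<lambda>h. u \<bullet> h)) (at (\<alpha> 0) within (\<alpha> ` UNIV))"
        using has_derivative_subset[OF that asph] a0 by simp
      show ?thesis using has_derivative_in_compose[OF da hs] .
    qed
    have "(\<lambda>t. w \<bullet> (t *\<^sub>R e1)) = (\<lambda>t. v \<bullet> (t *\<^sub>R e1))"
      using has_derivative_unique[OF comp[OF w(2)] comp[OF dv]] .
    from fun_cong[OF this, of 1] have "w \<bullet> e1 = v \<bullet> e1" by simp
    then have "e \<bullet> e1 = 0" by (simp add: e_def inner_diff_left)
    then have "norm e = 0" using ne by (simp add: e1_def dot_square_norm power2_eq_square)
    then show False using ne by simp
  qed
  have "sgrad (sdist q) x = v"
    unfolding sgrad_def
  proof (rule the_equality)
    show "v \<bullet> x = 0 \<and> (sdist q has_derivative (\<lambda>h. v \<bullet> h)) (at x within sphere 0 1)"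
      using vx dv by blast
    fix w assume "w \<bullet> x = 0 \<and> (sdist q has_derivative (\<lambda>h. w \<bullet> h)) (at x within sphere 0 1)"
    then show "w = v" using uniq by blast
  qed
  then show ?thesis using nv by simp
qed

lemma Ik_bounds:
  assumes "0 \<le> t" "t \<le> pi"
  shows "0 \<le> Ik k t" "Ik k t \<le> t"
proof -
  have int: "(\<lambda>s. sin s ^ (k - 1)) integrable_on {0..t}"
    by (intro integrable_continuous_interval continuous_intros)
  have nn: "0 \<le> sin s ^ (k - 1)" if "s \<in> {0..t}" for s
    using that assms by (intro zero_le_power sin_ge_zero) auto
  show "0 \<le> Ik k t" unfolding Ik_def by (rule integral_nonneg[OF int nn])
  have le1: "sin s ^ (k - 1) \<le> 1" if "s \<in> {0..t}" for s
  proof -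
    have "0 \<le> sin s" using that assms by (intro sin_ge_zero) auto
    then show ?thesis using power_le_one[OF _ sin_le_one] by blast
  qed
  have "Ik k t \<le> integral {0..t} (\<lambda>s. 1::real)"
    unfolding Ik_def by (rule integral_le[OF int]) (use le1 in auto)
  also have "\<dots> = t" using assms by simp
  finally show "Ik k t \<le> t" .
qed

lemma phi_bound:
  assumes "0 < t" "t < pi"
  shows "\<bar>phi k t\<bar> \<le> pi / sin t ^ (k - 1)"
proof -
  have s: "0 < sin t ^ (k - 1)" using sin_gt_zero[OF assms] by simp
  have "phi k t = Ik k t / sin t ^ (k - 1)" using assms by (simp add: phi_def)
  moreover have "\<bar>Ik k t\<bar> \<le> pi" using Ik_bounds[of t k] assms by auto
  ultimately show ?thesis using s by (simp add: divide_right_mono)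
qed

lemma sin_lower:
  assumes R: "0 < R" "R < pi / 2" and d: "0 \<le> d" "d \<le> pi - R / 2"
  shows "(cos 1 * sin (R / 2) / pi) * d \<le> sin d"
proof -
  have pi3: "pi > 3" by (rule pi_gt3)
  have c1: "0 < cos (1::real)" using pi3 by (intro cos_gt_zero) auto
  have c1le: "cos (1::real) \<le> 1" by simp
  have sR: "0 < sin (R / 2)" using R by (intro sin_gt_zero) auto
  have sRle: "sin (R / 2) \<le> 1" by simp
  show ?thesis
  proof (cases "d \<le> 1")
    case True
    show ?thesis
    proof (cases "d = 0")
      case True then show ?thesis by simp
    next
      case False
      then have "0 < d" using d by simp
      from MVT2[OF this, of sin cos] obtain z where z: "0 < z" "z < d" "sin d - sin 0 = (d - 0) * cos z"
        by (auto intro: DERIV_sin)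
      have "cos 1 \<le> cos z" using z True pi3 by (subst cos_mono_le_eq) auto
      have "(cos 1 * sin (R / 2) / pi) * d \<le> cos 1 * d"
      proof -
        have "sin (R / 2) \<le> pi" using sRle pi3 by linarith
        then have "sin (R / 2) / pi \<le> 1" by simp
        then have "cos 1 * (sin (R / 2) / pi) \<le> cos 1 * 1" using c1 by (intro mult_left_mono) auto
        then show ?thesis using d by (intro mult_right_mono) auto
      qed
      also have "\<dots> \<le> cos z * d" using \<open>cos 1 \<le> cos z\<close> d by (intro mult_right_mono) auto
      also have "\<dots> = sin d" using z by simp
      finally show ?thesis .
    qed
  next
    case False
    define d' where "d' = min d (pi - d)"
    have "sin d = sin d'" by (simp add: d'_def min_def sin_pi_minus)
    have d'b: "R / 2 \<le> d'" "d' \<le> pi / 2" using False d R pi3 pi_less_4 by (auto simp: d'_def min_def)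
    have "sin (R / 2) \<le> sin d'"
      using d'b R by (subst sin_mono_le_eq) auto
    have "(cos 1 * sin (R / 2) / pi) * d \<le> sin (R / 2)"
    proof -
      have "(cos 1 * sin (R / 2) / pi) * d = sin (R / 2) * (cos 1 * (d / pi))" by simp
      also have "\<dots> \<le> sin (R / 2) * 1"
      proof (intro mult_left_mono)
        have "d / pi \<le> 1" using d R by simp
        then show "cos 1 * (d / pi) \<le> 1"
          using c1 c1le d by (metis mult_le_one divide_nonneg_pos pi_gt_zero less_eq_real_def)
      qed (use sR in auto)
      finally show ?thesis by simp
    qed
    also have "\<dots> \<le> sin d" using \<open>sin (R / 2) \<le> sin d'\<close> \<open>sin d = sin d'\<close> by simp
    finally show ?thesis .
  qed
qed

lemma Psi_bound:
  fixes p y x :: "'a::euclidean_space" and \<gamma> :: "real \<Rightarrow> 'a"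
  assumes R: "0 < R" "R < pi / 2"
    and p: "norm p = 1" and y: "norm y = 1" and py: "sdist p y = R"
    and g: "\<gamma> ` {R..pi} \<subseteq> sphere 0 1"
    and gR: "\<gamma> R = y" and gpi: "\<gamma> pi = - p"
    and iso: "\<forall>s\<in>{R..pi}. \<forall>t\<in>{R..pi}. sdist (\<gamma> s) (\<gamma> t) = \<bar>s - t\<bar>"
    and pg: "\<forall>s\<in>{R..pi}. sdist p (\<gamma> s) = s"
    and x: "norm x = 1" and px: "sdist p x \<le> R"
    and dpos: "0 < sdist y x" and dsmall: "sdist y x < R / 2"
    and s: "s \<in> {R..pi}"
  shows "norm (Psi k (\<gamma> s) x) \<le> pi / ((cos 1 * sin (R / 2) / pi) * max (s - R) (sdist y x / 2)) ^ (k - 1)"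
proof -
  define a where "a = cos 1 * sin (R / 2) / pi"
  define \<delta> where "\<delta> = sdist y x"
  define d where "d = sdist (\<gamma> s) x"
  define m where "m = max (s - R) (\<delta> / 2)"
  have pi3: "pi > 3" by (rule pi_gt3)
  have apos: "0 < a" unfolding a_def
    using R pi3 by (intro divide_pos_pos mult_pos_pos cos_gt_zero sin_gt_zero) auto
  have gs: "norm (\<gamma> s) = 1" using g s by (metis image_subset_iff mem_sphere_0)
  have gRn: "R \<in> {R..pi}" "pi \<in> {R..pi}" using R by auto
  have mp: "norm (-p) = 1" using p by simp
  have t1: "s \<le> R + d"
    using sdist_triangle[OF p x gs] px pg s by (simp add: d_def sdist_sym)
  have ys: "sdist y (\<gamma> s) = s - R"
    using iso gRn s gR by auto
  have t2: "\<delta> \<le> (s - R) + d"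
    using sdist_triangle[OF y gs x] ys by (simp add: d_def \<delta>_def sdist_sym)
  have t3: "d \<le> (s - R) + \<delta>"
    using sdist_triangle[OF gs y x] ys by (simp add: d_def \<delta>_def sdist_sym)
  have gp: "sdist (\<gamma> s) (-p) = pi - s"
  proof -
    have "sdist (\<gamma> s) (\<gamma> pi) = \<bar>s - pi\<bar>" using iso gRn s by blast
    then show ?thesis using gpi s by simp
  qed
  have t4: "d \<le> (pi - s) + (pi - sdist p x)"
    using sdist_triangle[OF gs mp x] gp sdist_neg[OF p x] by (simp add: d_def)
  have t5: "R \<le> sdist p x + \<delta>"
    using sdist_triangle[OF p x y] py by (simp add: \<delta>_def sdist_sym)
  have dub: "d \<le> pi - R / 2" using t3 t4 t5 dsmall by (simp add: \<delta>_def)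
  have mpos: "0 < m" using dpos by (simp add: m_def \<delta>_def)
  have md: "m \<le> d" using t1 t2 by (simp add: m_def)
  have d0: "0 < d" using mpos md by simp
  have bnd_nonneg: "0 \<le> pi / (a * m) ^ (k - 1)" using apos mpos by simp
  show ?thesis
  proof (cases "x = - \<gamma> s")
    case True
    have "sdist (- \<gamma> s) x = 0" using True sdist_self[of "- \<gamma> s"] gs by simp
    then have "Psi k (\<gamma> s) x = 0" by (simp add: Psi_def Phi_def phi_def)
    then show ?thesis using bnd_nonneg by (simp add: a_def m_def \<delta>_def)
  next
    case False
    have "x \<noteq> \<gamma> s" using d0 sdist_self[OF gs] by (auto simp: d_def)
    then have ng: "norm (sgrad (sdist (- \<gamma> s)) x) = 1"
      using sgrad_sdist_norm[of "- \<gamma> s" x] gs x False by auto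
    have e: "sdist (- \<gamma> s) x = pi - d" using sdist_neg[OF gs x] by (simp add: d_def)
    have "norm (Psi k (\<gamma> s) x) = \<bar>phi k (pi - d)\<bar>"
      using ng e by (simp add: Psi_def Phi_def)
    also have "\<dots> \<le> pi / sin (pi - d) ^ (k - 1)"
      using d0 dub R by (intro phi_bound) auto
    also have "\<dots> = pi / sin d ^ (k - 1)" by (simp add: sin_pi_minus)
    also have "\<dots> \<le> pi / (a * m) ^ (k - 1)"
    proof -
      have "a * m \<le> a * d" using md apos by simp
      also have "\<dots> \<le> sin d" unfolding a_def using sin_lower[OF R, of d] d0 dub by simp
      finally have "(a * m) ^ (k - 1) \<le> sin d ^ (k - 1)"
        using apos mpos by (intro power_mono) auto
      moreover have "0 < (a * m) ^ (k - 1)" using apos mpos by simp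
      ultimately show ?thesis by (intro divide_left_mono) auto
    qed
    finally show ?thesis by (simp add: a_def m_def \<delta>_def)
  qed
qed

lemma pow_bound_mono:
  fixes a l m :: real
  assumes "0 < a" "0 < l" "l \<le> m"
  shows "pi / (a * m) ^ n \<le> pi / (a * l) ^ n"
proof -
  have "(a * l) ^ n \<le> (a * m) ^ n" using assms by (intro power_mono) auto
  moreover have "0 < (a * l) ^ n" using assms by simp
  ultimately show ?thesis by (intro divide_left_mono) auto
qed

lemma integral_bound:
  fixes p y x :: "'a::euclidean_space" and \<gamma> :: "real \<Rightarrow> 'a" and u :: "real \<Rightarrow> real"
  assumes k: "k \<ge> 2" and R: "0 < R" "R < pi / 2"
    and p: "norm p = 1" and y: "norm y = 1" and py: "sdist p y = R"
    and g: "\<gamma> ` {R..pi} \<subseteq> sphere 0 1"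
    and gR: "\<gamma> R = y" and gpi: "\<gamma> pi = - p"
    and iso: "\<forall>s\<in>{R..pi}. \<forall>t\<in>{R..pi}. sdist (\<gamma> s) (\<gamma> t) = \<bar>s - t\<bar>"
    and pg: "\<forall>s\<in>{R..pi}. sdist p (\<gamma> s) = s"
    and x: "norm x = 1" and px: "sdist p x \<le> R"
    and dpos: "0 < sdist y x" and dsmall: "sdist y x < R / 2" and d1: "sdist y x \<le> 1"
    and U: "0 \<le> U" "\<forall>s\<in>{R..pi}. \<bar>u s\<bar> \<le> U"
  shows "norm (integral {R..pi} (\<lambda>s. u s *\<^sub>R Psi k (\<gamma> s) x)) * sdist y x ^ (k - 1)
     \<le> (U * pi * (2 ^ (k - 1) + pi) / (cos 1 * sin (R / 2) / pi) ^ (k - 1)) * sqrt (sdist y x)"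
proof -
  define a where "a = cos 1 * sin (R / 2) / pi"
  define \<delta> where "\<delta> = sdist y x"
  define \<eta> where "\<eta> = sqrt \<delta>"
  define n where "n = k - 1"
  have n1: "1 \<le> n" using k by (simp add: n_def)
  have pi3: "pi > 3" by (rule pi_gt3)
  have apos: "0 < a" unfolding a_def
    using R pi3 by (intro divide_pos_pos mult_pos_pos cos_gt_zero sin_gt_zero) auto
  have dp: "0 < \<delta>" using dpos by (simp add: \<delta>_def)
  have ep: "0 < \<eta>" using dp by (simp add: \<eta>_def)
  have e1: "\<eta> \<le> 1" using d1 by (simp add: \<eta>_def \<delta>_def)
  have esq: "\<eta> ^ 2 = \<delta>" using dp by (simp add: \<eta>_def)
  define A where "A = U * (pi / (a * (\<delta> / 2)) ^ n)"
  define B where "B = U * (pi / (a * \<eta>) ^ n)"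
  have A0: "0 \<le> A" using U apos dp by (simp add: A_def)
  have B0: "0 \<le> B" using U apos ep by (simp add: B_def)
  define G where "G = (\<lambda>s. (if s \<in> {R..R + \<eta>} then A else 0) + B)"
  define f where "f = (\<lambda>s. u s *\<^sub>R Psi k (\<gamma> s) x)"
  have fG: "norm (f s) \<le> G s" if s: "s \<in> {R..pi}" for s
  proof -
    define m where "m = max (s - R) (\<delta> / 2)"
    have PB: "norm (Psi k (\<gamma> s) x) \<le> pi / (a * m) ^ n"
      using Psi_bound[OF R p y py g gR gpi iso pg x px dpos dsmall s, of k]
      by (simp add: a_def m_def n_def \<delta>_def)
    have "norm (f s) = \<bar>u s\<bar> * norm (Psi k (\<gamma> s) x)" by (simp add: f_def)
    also have "\<dots> \<le> U * (pi / (a * m) ^ n)"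
      using U s PB by (intro mult_mono) auto
    also have "\<dots> \<le> G s"
    proof (cases "s \<in> {R..R + \<eta>}")
      case True
      have "pi / (a * m) ^ n \<le> pi / (a * (\<delta> / 2)) ^ n"
        using apos dp by (intro pow_bound_mono) (auto simp: m_def)
      then have "U * (pi / (a * m) ^ n) \<le> A" unfolding A_def using U by (intro mult_left_mono) auto
      then show ?thesis using True B0 by (simp add: G_def)
    next
      case False
      then have "\<eta> \<le> m" using s by (auto simp: m_def)
      then have "pi / (a * m) ^ n \<le> pi / (a * \<eta>) ^ n"
        using apos ep by (intro pow_bound_mono) auto
      then have "U * (pi / (a * m) ^ n) \<le> B" unfolding B_def using U by (intro mult_left_mono) auto
      then show ?thesis using False by (auto simp: G_def)
    qed
    finally show ?thesis .
  qed
  have int1: "(\<lambda>s. if s \<in> {R..R + \<eta>} then A else 0) integrable_on {R..pi}"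
    by (subst integrable_restrict_Int) (simp add: Int_atLeastAtMost integrable_const_ivl)
  have intG: "G integrable_on {R..pi}"
    unfolding G_def by (intro integrable_add int1 integrable_const_ivl)
  have IG: "integral {R..pi} G = A * (min (R + \<eta>) pi - R) + B * (pi - R)"
  proof -
    have "integral {R..pi} G = integral {R..pi} (\<lambda>s. if s \<in> {R..R + \<eta>} then A else 0) + integral {R..pi} (\<lambda>s. B)"
      unfolding G_def by (rule integral_add[OF int1 integrable_const_ivl])
    also have "integral {R..pi} (\<lambda>s. if s \<in> {R..R + \<eta>} then A else 0) = integral {R..min (R + \<eta>) pi} (\<lambda>s. A)"
      by (subst integral_restrict_Int) (simp add: Int_atLeastAtMost)
    also have "\<dots> = A * (min (R + \<eta>) pi - R)" using ep R pi3 by simp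
    also have "integral {R..pi} (\<lambda>s. B) = B * (pi - R)" using R pi3 by simp
    finally show ?thesis .
  qed
  have "norm (integral {R..pi} f) \<le> integral {R..pi} G"
  proof (cases "f integrable_on {R..pi}")
    case True
    then show ?thesis using integral_norm_bound_integral[OF True intG fG] by simp
  next
    case False
    then have "integral {R..pi} f = 0" by (simp add: not_integrable_integral)
    moreover have "0 \<le> integral {R..pi} G"
      using intG fG by (intro integral_nonneg) (auto intro: order_trans[OF norm_ge_zero])
    ultimately show ?thesis by simp
  qed
  also have "\<dots> \<le> A * \<eta> + B * pi"
  proof -
    have "A * (min (R + \<eta>) pi - R) \<le> A * \<eta>" using A0 by (intro mult_left_mono) auto
    moreover have "B * (pi - R) \<le> B * pi" using B0 R by (intro mult_left_mono) auto
    ultimately show ?thesis using IG by simp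
  qed
  finally have I: "norm (integral {R..pi} f) \<le> A * \<eta> + B * pi" .
  have dn: "0 \<le> \<delta> ^ n" using dp by simp
  have "norm (integral {R..pi} f) * \<delta> ^ n \<le> (A * \<eta> + B * pi) * \<delta> ^ n"
    using I dn by (intro mult_right_mono) auto
  also have "\<dots> = A * \<delta> ^ n * \<eta> + B * \<delta> ^ n * pi" by (simp add: algebra_simps)
  also have "A * \<delta> ^ n = U * pi * 2 ^ n / a ^ n"
    using apos dp by (simp add: A_def power_mult_distrib power_divide field_simps)
  also have "B * \<delta> ^ n = U * pi * \<eta> ^ n / a ^ n"
  proof -
    have "\<delta> ^ n = (\<eta> * \<eta>) ^ n" using esq by (simp add: power2_eq_square)
    also have "\<dots> = \<eta> ^ n * \<eta> ^ n" by (rule power_mult_distrib)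
    finally have "\<delta> ^ n = \<eta> ^ n * \<eta> ^ n" .
    then show ?thesis using apos ep by (simp add: B_def power_mult_distrib field_simps)
  qed
  also have "U * pi * 2 ^ n / a ^ n * \<eta> + U * pi * \<eta> ^ n / a ^ n * pi
      \<le> U * pi * 2 ^ n / a ^ n * \<eta> + U * pi * \<eta> / a ^ n * pi"
  proof -
    have "\<eta> ^ n \<le> \<eta> ^ 1" using n1 ep e1 by (intro power_decreasing) auto
    then have "U * pi * \<eta> ^ n / a ^ n \<le> U * pi * \<eta> / a ^ n"
      using U apos by (intro divide_right_mono mult_left_mono) auto
    then show ?thesis by (intro add_left_mono mult_right_mono) auto
  qed
  also have "\<dots> = (U * pi * (2 ^ n + pi) / a ^ n) * \<eta>" by (simp add: field_simps add_divide_distrib)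
  finally show ?thesis by (simp add: f_def a_def \<eta>_def \<delta>_def n_def)
qed

theorem lemma2p12:
  fixes k :: nat and p y :: "'a::euclidean_space" and R :: real
    and \<gamma> :: "real \<Rightarrow> 'a" and u :: "real \<Rightarrow> real"
  assumes "k \<ge> 2"
    and "p \<in> sphere 0 1"
    and "0 < R" "R < pi / 2"
    and "y \<in> sphere 0 1" "sdist p y = R"
    and "\<gamma> ` {R..pi} \<subseteq> sphere 0 1"
    and "\<gamma> R = y" "\<gamma> pi = - p"
    and "\<forall>s\<in>{R..pi}. \<forall>t\<in>{R..pi}. sdist (\<gamma> s) (\<gamma> t) = \<bar>s - t\<bar>"
    and "\<forall>s\<in>{R..pi}. sdist p (\<gamma> s) = s"
    and "u integrable_on {R..pi}"
    and "bounded (u ` {R..pi})"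
  shows "((\<lambda>x. norm (integral {R..pi} (\<lambda>s. u s *\<^sub>R Psi k (\<gamma> s) x))
                 / sdist y x powr (1 - real k))
          \<longlongrightarrow> 0) (at y within ({q \<in> sphere 0 1. sdist p q \<le> R} - {y}))"
proof -
  note k = assms(1) and R = assms(3,4) and py = assms(6) and g = assms(7)
    and gR = assms(8) and gpi = assms(9) and iso = assms(10) and pg = assms(11)
  have p: "norm p = 1" using assms(2) by simp
  have y: "norm y = 1" using assms(5) by simp
  obtain U0 where U0: "\<forall>z\<in>u ` {R..pi}. norm z \<le> U0" using assms(13) by (auto simp: bounded_iff)
  define U where "U = max U0 0"
  have U: "0 \<le> U" "\<forall>s\<in>{R..pi}. \<bar>u s\<bar> \<le> U" using U0 by (auto simp: U_def intro: le_max_iff_disj[THEN iffD2])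
  define S where "S = {q \<in> sphere 0 (1::real). sdist p q \<le> R} - {y}"
  define K where "K = U * pi * (2 ^ (k - 1) + pi) / (cos 1 * sin (R / 2) / pi) ^ (k - 1)"
  have cont: "continuous_on (sphere 0 1) (\<lambda>x. arccos (y \<bullet> x))"
    using unit_inner_bounds[OF y] by (intro continuous_on_arccos continuous_intros) auto
  have "((\<lambda>x. arccos (y \<bullet> x)) \<longlongrightarrow> arccos (y \<bullet> y)) (at y within sphere 0 1)"
    using cont assms(5) by (simp add: continuous_on_def)
  moreover have "arccos (y \<bullet> y) = 0" using y by (simp add: dot_square_norm)
  ultimately have "((\<lambda>x. sdist y x) \<longlongrightarrow> 0) (at y within sphere 0 1)" by (simp add: sdist_def)
  then have tend: "((\<lambda>x. sdist y x) \<longlongrightarrow> 0) (at y within S)"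
    by (rule tendsto_within_subset) (auto simp: S_def)
  have ev1: "eventually (\<lambda>x. sdist y x < min (R / 2) 1) (at y within S)"
    using order_tendstoD(2)[OF tend, of "min (R / 2) 1"] R by simp
  have ev2: "eventually (\<lambda>x. x \<in> S) (at y within S)"
    by (simp add: eventually_at_filter)
  have bound: "norm (integral {R..pi} (\<lambda>s. u s *\<^sub>R Psi k (\<gamma> s) x)) / sdist y x powr (1 - real k)
      \<le> K * sqrt (sdist y x)" if xS: "x \<in> S" and xd: "sdist y x < min (R / 2) 1" for x
  proof -
    have x: "norm x = 1" and px: "sdist p x \<le> R" and xy: "x \<noteq> y" using xS by (auto simp: S_def)
    have dpos: "0 < sdist y x"
    proof -
      have "sdist y x \<noteq> 0" using sdist_zero_iff[OF y x] xy by auto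
      then show ?thesis using sdist_range[OF y x] by simp
    qed
    have "sdist y x powr (1 - real k) = sdist y x powr (- real (k - 1))"
      using k by (simp add: of_nat_diff)
    also have "\<dots> = inverse (sdist y x ^ (k - 1))"
      using dpos by (simp add: powr_minus powr_realpow)
    finally have e: "norm (integral {R..pi} (\<lambda>s. u s *\<^sub>R Psi k (\<gamma> s) x)) / sdist y x powr (1 - real k)
      = norm (integral {R..pi} (\<lambda>s. u s *\<^sub>R Psi k (\<gamma> s) x)) * sdist y x ^ (k - 1)"
      by (simp add: divide_inverse)
    have xd1: "sdist y x < R / 2" and xd2: "sdist y x \<le> 1" using xd by auto
    show ?thesis unfolding e K_def
      using integral_bound[OF k R p y py g gR gpi iso pg x px dpos xd1 xd2 U] by simp
  qed
  have "((\<lambda>x. K * sqrt (sdist y x)) \<longlongrightarrow> K * sqrt 0) (at y within S)"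
    by (intro tendsto_mult tendsto_const tendsto_real_sqrt tend)
  then have h: "((\<lambda>x. K * sqrt (sdist y x)) \<longlongrightarrow> 0) (at y within S)" by simp
  have lo: "eventually (\<lambda>x. 0 \<le> norm (integral {R..pi} (\<lambda>s. u s *\<^sub>R Psi k (\<gamma> s) x)) / sdist y x powr (1 - real k)) (at y within S)"
    by (intro always_eventually allI divide_nonneg_nonneg norm_ge_zero) simp
  have hi: "eventually (\<lambda>x. norm (integral {R..pi} (\<lambda>s. u s *\<^sub>R Psi k (\<gamma> s) x)) / sdist y x powr (1 - real k) \<le> K * sqrt (sdist y x)) (at y within S)"
    using ev1 ev2 by eventually_elim (rule bound)
  show ?thesis
    using tendsto_sandwich[OF lo hi tendsto_const h] by (simp add: S_def)
qed

end
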